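(* Let $A>0$ and let $f:[0,A]\rightarrow\mathbb{R}$ be a continuous $3$-convex function. Then \[ f(x)+f(y)+f(z)+f(x+y+z)\geq f(x+y)+f(y+z)+f(z+x)+f(0) \] for all $x,y,z\in[0,A]$ with $x+y+z\leq A$. If in addition $f(0)\geq0$, then \[ f(x)+f(y)+f(z)+f(x+y+z)\geq f(x+y)+f(y+z)+f(z+x) \] for all such $x,y,z$.
   Context: A function $f$ defined on an interval $I$ is called $3$-convex if for all $x_0<x_1<x_2<x_3$ in $I$ the third-order divided difference $[x_0,x_1,x_2,x_3;f]=\sum_{j=0}^{3}\frac{f(x_j)}{\prod_{k\neq j}(x_j-x_k)}$ is nonnegative. *)

theory Defs
  imports "HOL-Analysis.Analysis"
begin

definition divdiff3 :: "(real \<Rightarrow> real) \<Rightarrow> real \<Rightarrow> real \<Rightarrow> real \<Rightarrow> real \<Rightarrow> real" where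
  "divdiff3 f x0 x1 x2 x3 =
     f x0 / ((x0 - x1) * (x0 - x2) * (x0 - x3))
   + f x1 / ((x1 - x0) * (x1 - x2) * (x1 - x3))
   + f x2 / ((x2 - x0) * (x2 - x1) * (x2 - x3))
   + f x3 / ((x3 - x0) * (x3 - x1) * (x3 - x2))"

definition convex3_on :: "real set \<Rightarrow> (real \<Rightarrow> real) \<Rightarrow> bool" where
  "convex3_on I f \<longleftrightarrow>
     (\<forall>x0 x1 x2 x3. x0 \<in> I \<and> x1 \<in> I \<and> x2 \<in> I \<and> x3 \<in> I \<and>
        x0 < x1 \<and> x1 < x2 \<and> x2 < x3 \<longrightarrow> divdiff3 f x0 x1 x2 x3 \<ge> 0)"

end

theory Submission
  imports Defs
begin

definition dd2 :: "(real \<Rightarrow> real) \<Rightarrow> real \<Rightarrow> real \<Rightarrow> real \<Rightarrow> real" where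
  "dd2 f a b c = f a / ((a - b) * (a - c)) + f b / ((b - a) * (b - c)) + f c / ((c - a) * (c - b))"
definition dd1 :: "(real \<Rightarrow> real) \<Rightarrow> real \<Rightarrow> real \<Rightarrow> real" where
  "dd1 f a b = (f b - f a) / (b - a)"
lemma g3a: assumes "p > 0" "q > 0" "r > 0" shows
  "dd2 f x0 (x0+p) (x0+p+q+r) - dd2 f x0 (x0+p) (x0+p+q) = r * divdiff3 f x0 (x0+p) (x0+p+q) (x0+p+q+r)"
  unfolding dd2_def divdiff3_def
  using assms apply (simp add: divide_simps) by algebra
lemma g3b: assumes "p > 0" "q > 0" "r > 0" shows
  "dd2 f x0 (x0+p+q) (x0+p+q+r) - dd2 f x0 (x0+p) (x0+p+q+r) = q * divdiff3 f x0 (x0+p) (x0+p+q) (x0+p+q+r)"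
  unfolding dd2_def divdiff3_def
  using assms apply (simp add: divide_simps) by algebra
lemma g3c: assumes "p > 0" "q > 0" "r > 0" shows
  "dd2 f (x0+p) (x0+p+q) (x0+p+q+r) - dd2 f x0 (x0+p+q) (x0+p+q+r) = p * divdiff3 f x0 (x0+p) (x0+p+q) (x0+p+q+r)"
  unfolding dd2_def divdiff3_def
  using assms apply (simp add: divide_simps) by algebra
lemma g2a: assumes "p > 0" "q > 0" shows "dd1 g a (a+p+q) - dd1 g a (a+p) = q * dd2 g a (a+p) (a+p+q)"
  unfolding dd2_def dd1_def
  using assms apply (simp add: divide_simps) by algebra
lemma g2b: assumes "p > 0" "q > 0" shows "dd1 g (a+p) (a+p+q) - dd1 g a (a+p+q) = p * dd2 g a (a+p) (a+p+q)"
  unfolding dd2_def dd1_def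
  using assms apply (simp add: divide_simps) by algebra
lemma shift_dd2: "a < b \<Longrightarrow> b < c \<Longrightarrow>
  dd2 (\<lambda>s. f (s + z) - f s) a b c = dd2 f (a + z) (b + z) (c + z) - dd2 f a b c"
  unfolding dd2_def by (simp add: diff_divide_distrib)
lemma id3a: "x0 < x1 \<Longrightarrow> x1 < x2 \<Longrightarrow> x2 < x3 \<Longrightarrow>
  dd2 f x0 x1 x3 - dd2 f x0 x1 x2 = (x3 - x2) * divdiff3 f x0 x1 x2 x3"
  using g3a[of "x1-x0" "x2-x1" "x3-x2" f x0] by simp
lemma id3b: "x0 < x1 \<Longrightarrow> x1 < x2 \<Longrightarrow> x2 < x3 \<Longrightarrow>
  dd2 f x0 x2 x3 - dd2 f x0 x1 x3 = (x2 - x1) * divdiff3 f x0 x1 x2 x3"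
  using g3b[of "x1-x0" "x2-x1" "x3-x2" f x0] by simp
lemma id3c: "x0 < x1 \<Longrightarrow> x1 < x2 \<Longrightarrow> x2 < x3 \<Longrightarrow>
  dd2 f x1 x2 x3 - dd2 f x0 x2 x3 = (x1 - x0) * divdiff3 f x0 x1 x2 x3"
  using g3c[of "x1-x0" "x2-x1" "x3-x2" f x0] by simp
lemma id2a: "a < b \<Longrightarrow> b < c \<Longrightarrow> dd1 g a c - dd1 g a b = (c - b) * dd2 g a b c"
  using g2a[of "b-a" "c-b" g a] by simp
lemma id2b: "a < b \<Longrightarrow> b < c \<Longrightarrow> dd1 g b c - dd1 g a c = (b - a) * dd2 g a b c"
  using g2b[of "b-a" "c-b" g a] by simp

lemma mono_shift:
  assumes c3: "convex3_on {0..A} f" and z: "z > 0"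
    and s: "s0 < s1" "s1 < s2" "0 \<le> s0" "s2 + z \<le> A"
  shows "dd2 f s0 s1 s2 \<le> dd2 f (s0 + z) (s1 + z) (s2 + z)"
proof -
  have D: "divdiff3 f a b c d \<ge> 0" if "a < b" "b < c" "c < d" "0 \<le> a" "d \<le> A" for a b c d
    using c3 that unfolding convex3_on_def by auto
  have 1: "dd2 f s0 s1 (s2 + z) - dd2 f s0 s1 s2 \<ge> 0"
    using id3a[of s0 s1 s2 "s2 + z" f] D[of s0 s1 s2 "s2+z"] s z by simp
  have 2: "dd2 f s0 (s1 + z) (s2 + z) - dd2 f s0 s1 (s2 + z) \<ge> 0"
    using id3b[of s0 s1 "s1 + z" "s2 + z" f] D[of s0 s1 "s1+z" "s2+z"] s z by simp
  have 3: "dd2 f (s0 + z) (s1 + z) (s2 + z) - dd2 f s0 (s1 + z) (s2 + z) \<ge> 0"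
    using id3c[of s0 "s0 + z" "s1 + z" "s2 + z" f] D[of s0 "s0 + z" "s1+z" "s2+z"] s z by simp
  show ?thesis using 1 2 3 by linarith
qed

lemma main_pos:
  fixes f :: "real \<Rightarrow> real"
  assumes c3: "convex3_on {0..A} f" and x: "x > 0" and y: "y > 0" and z: "z > 0"
    and s: "x + y + z \<le> A"
  shows "f x + f y + f z + f (x + y + z) \<ge> f (x + y) + f (y + z) + f (z + x) + f 0"
proof -
  define g where "g = (\<lambda>s. f (s + z) - f s)"
  have C: "dd2 g a b c \<ge> 0" if "a < b" "b < c" "0 \<le> a" "c \<le> x + y" for a b c
    using shift_dd2[of a b c f z] mono_shift[OF c3 z, of a b c] that s unfolding g_def by simp
  have 1: "dd1 g 0 (x + y) - dd1 g 0 y \<ge> 0"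
    using id2a[of 0 y "x + y" g] C[of 0 y "x+y"] x y by simp
  have 2: "dd1 g x (x + y) - dd1 g 0 (x + y) \<ge> 0"
    using id2b[of 0 x "x + y" g] C[of 0 x "x+y"] x y by simp
  have "dd1 g x (x + y) - dd1 g 0 y \<ge> 0" using 1 2 by linarith
  then have "(g (x + y) - g x) / y - (g y - g 0) / y \<ge> 0" unfolding dd1_def by simp
  then have "(g (x + y) - g x) / y - (g y - g 0) / y = (g (x + y) - g x - g y + g 0) / y"
    using y by (simp add: field_simps)
  then have "(g (x + y) - g x - g y + g 0) / y \<ge> 0" using \<open>(g (x + y) - g x) / y - (g y - g 0) / y \<ge> 0\<close> by linarith
  then have "g (x + y) - g x - g y + g 0 \<ge> 0" using y by (simp add: zero_le_divide_iff)
  then show ?thesis unfolding g_def by (simp add: algebra_simps)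
qed

theorem proposition1:
  fixes A :: real and f :: "real \<Rightarrow> real"
  assumes "A > 0"
    and "continuous_on {0..A} f"
    and "convex3_on {0..A} f"
  shows "(\<forall>x y z. x \<in> {0..A} \<and> y \<in> {0..A} \<and> z \<in> {0..A} \<and> x + y + z \<le> A \<longrightarrow>
            f x + f y + f z + f (x + y + z) \<ge> f (x + y) + f (y + z) + f (z + x) + f 0)
       \<and> (f 0 \<ge> 0 \<longrightarrow>
          (\<forall>x y z. x \<in> {0..A} \<and> y \<in> {0..A} \<and> z \<in> {0..A} \<and> x + y + z \<le> A \<longrightarrow>
            f x + f y + f z + f (x + y + z) \<ge> f (x + y) + f (y + z) + f (z + x)))"
proof -
  have P: "f x + f y + f z + f (x + y + z) \<ge> f (x + y) + f (y + z) + f (z + x) + f 0"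
    if "x \<in> {0..A}" "y \<in> {0..A}" "z \<in> {0..A}" "x + y + z \<le> A" for x y z
  proof (cases "x = 0 \<or> y = 0 \<or> z = 0")
    case True
    then show ?thesis by (elim disjE) (simp_all add: add.commute)
  next
    case False
    then have "x > 0" "y > 0" "z > 0" using that by auto
    then show ?thesis using that(4) main_pos[OF assms(3), of x y z] by blast
  qed
  show ?thesis
  proof (intro conjI allI impI)
    fix x y z assume "x \<in> {0..A} \<and> y \<in> {0..A} \<and> z \<in> {0..A} \<and> x + y + z \<le> A"
    then show "f x + f y + f z + f (x + y + z) \<ge> f (x + y) + f (y + z) + f (z + x) + f 0"
      using P by blast
  next
    fix x y z assume h0: "f 0 \<ge> 0" and "x \<in> {0..A} \<and> y \<in> {0..A} \<and> z \<in> {0..A} \<and> x + y + z \<le> A"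
    then have "f x + f y + f z + f (x + y + z) \<ge> f (x + y) + f (y + z) + f (z + x) + f 0"
      using P by blast
    then show "f x + f y + f z + f (x + y + z) \<ge> f (x + y) + f (y + z) + f (z + x)"
      using h0 by linarith
  qed
qed

end
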